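(* Let $(\mathcal{A},\{\mu_n\}_{n\ge1})$ be an $A_\infty$-algebra and $\mathcal{N}:\mathcal{A}\to\mathcal{A}$ a strict homotopy Nijenhuis operator on it. (i) For every $k\ge0$, $\mathcal{N}^k$ is a strict homotopy Nijenhuis operator on $(\mathcal{A},\{\mu_n\}_{n\ge1})$; hence one has the deformed $A_\infty$-algebra $(\mathcal{A},\{\mu_{n,\mathcal{N}^k}\}_{n\ge1})$. (ii) For all $k,l\ge0$, $\mathcal{N}^l$ is a strict homotopy Nijenhuis operator on the deformed $A_\infty$-algebra $(\mathcal{A},\{\mu_{n,\mathcal{N}^k}\}_{n\ge1})$.
   Context: Over a field of characteristic $0$. An $A_\infty$-algebra: graded vector space $\mathcal{A}$ with degree $n-2$ maps $\mu_n:\mathcal{A}^{\otimes n}\to\mathcal{A}$ such that for all $k\ge1$ and homogeneous $a_1,\dots,a_k$: $\sum_{m+n=k+1}\sum_{i=1}^m(-1)^{i(n+1)+n(|a_1|+\cdots+|a_{i-1}|)}\mu_m(a_1,\dots,a_{i-1},\mu_n(a_i,\dots,a_{i+n-1}),a_{i+n},\dots,a_k)=0$. For a degree $0$ linear map $\mathcal{P}$, $S\subseteq\{1,\dots,n\}$ and homogeneous $a_1,\dots,a_n$, write $\mu_n^{S,\mathcal{P}}(a_1,\dots,a_n)=\mu_n(c_1,\dots,c_n)$ with $c_i=a_i$ for $i\in S$, $c_i=\mathcal{P}(a_i)$ for $i\notin S$. $\mathcal{P}$ is a strict homotopy Nijenhuis operator on $(\mathcal{A},\{\mu_n\})$ if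 $\mu_n(\mathcal{P}a_1,\dots,\mathcal{P}a_n)=\sum_{j=1}^n(-1)^{j-1}\mathcal{P}^j\big(\sum_{|S|=j}\mu_n^{S,\mathcal{P}}(a_1,\dots,a_n)\big)$ for all $n\ge1$. The deformed $A_\infty$-algebra of such $\mathcal{P}$ has $\mu_{1,\mathcal{P}}=\mu_1$ and $\mu_{n,\mathcal{P}}(a_1,\dots,a_n)=\sum_{j=1}^n(-1)^{j-1}\mathcal{P}^{j-1}\big(\sum_{|S|=j}\mu_n^{S,\mathcal{P}}(a_1,\dots,a_n)\big)$ for $n\ge2$ (it is an $A_\infty$-algebra). $\mathcal{N}^0=\mathrm{Id}$. *)

theory Defs
  imports Complex_Main
begin

definition graded_vs :: "('k::field_char_0 \<Rightarrow> 'v::ab_group_add \<Rightarrow> 'v) \<Rightarrow> (int \<Rightarrow> 'v set) \<Rightarrow> bool" where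
  "graded_vs scale G \<longleftrightarrow> vector_space scale \<and> (\<forall>d. Modules.module.subspace scale (G d)) \<and>
     (\<forall>v. \<exists>!c :: int \<Rightarrow> 'v. finite {d. c d \<noteq> 0} \<and> (\<forall>d. c d \<in> G d) \<and>
            v = (\<Sum>d\<in>{d. c d \<noteq> 0}. c d))"

definition homs :: "(int \<Rightarrow> 'v set) \<Rightarrow> int list \<Rightarrow> 'v list \<Rightarrow> bool" where
  "homs G ds as \<longleftrightarrow> length as = length ds \<and> (\<forall>i<length as. as ! i \<in> G (ds ! i))"

definition sgnI :: "int \<Rightarrow> 'k::field" where
  "sgnI e = (if even e then 1 else -1)"

definition multilinear :: "('k::field \<Rightarrow> 'v::ab_group_add \<Rightarrow> 'v) \<Rightarrow> nat \<Rightarrow> ('v list \<Rightarrow> 'v) \<Rightarrow> bool" where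
  "multilinear scale n f \<longleftrightarrow>
     (\<forall>as i. length as = n \<longrightarrow> i < n \<longrightarrow> Vector_Spaces.linear scale scale (\<lambda>x. f (as[i := x])))"

definition stasheff :: "('k::field \<Rightarrow> 'v::ab_group_add \<Rightarrow> 'v) \<Rightarrow> (nat \<Rightarrow> 'v list \<Rightarrow> 'v) \<Rightarrow> nat \<Rightarrow> int list \<Rightarrow> 'v list \<Rightarrow> 'v" where
  "stasheff scale \<mu> k ds as =
     (\<Sum>m\<in>{1..k}. let n = k + 1 - m in
        \<Sum>i\<in>{1..m}. scale (sgnI (int i * (int n + 1) + int n * sum_list (take (i - 1) ds)))
          (\<mu> m (take (i - 1) as @ [\<mu> n (take n (drop (i - 1) as))] @ drop (i - 1 + n) as)))"

definition A_inf :: "('k::field_char_0 \<Rightarrow> 'v::ab_group_add \<Rightarrow> 'v) \<Rightarrow> (int \<Rightarrow> 'v set) \<Rightarrow> (nat \<Rightarrow> 'v list \<Rightarrow> 'v) \<Rightarrow> bool" where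
  "A_inf scale G \<mu> \<longleftrightarrow> graded_vs scale G \<and>
     (\<forall>n\<ge>1. multilinear scale n (\<mu> n) \<and>
        (\<forall>ds as. length ds = n \<longrightarrow> homs G ds as \<longrightarrow> \<mu> n as \<in> G (sum_list ds + int n - 2))) \<and>
     (\<forall>k\<ge>1. \<forall>ds as. length ds = k \<longrightarrow> homs G ds as \<longrightarrow> stasheff scale \<mu> k ds as = 0)"

definition muSP :: "(nat \<Rightarrow> 'v list \<Rightarrow> 'v) \<Rightarrow> ('v \<Rightarrow> 'v) \<Rightarrow> nat \<Rightarrow> nat set \<Rightarrow> 'v list \<Rightarrow> 'v" where
  "muSP \<mu> P n S as = \<mu> n (map (\<lambda>i. if i + 1 \<in> S then as ! i else P (as ! i)) [0..<n])"

definition muSP_sum :: "(nat \<Rightarrow> 'v list \<Rightarrow> 'v) \<Rightarrow> ('v \<Rightarrow> 'v) \<Rightarrow> nat \<Rightarrow> nat \<Rightarrow> 'v list \<Rightarrow> 'v::comm_monoid_add" where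
  "muSP_sum \<mu> P n j as = (\<Sum>S\<in>{S. S \<subseteq> {1..n} \<and> card S = j}. muSP \<mu> P n S as)"

definition strict_hN :: "('k::field_char_0 \<Rightarrow> 'v::ab_group_add \<Rightarrow> 'v) \<Rightarrow> (int \<Rightarrow> 'v set) \<Rightarrow> (nat \<Rightarrow> 'v list \<Rightarrow> 'v) \<Rightarrow> ('v \<Rightarrow> 'v) \<Rightarrow> bool" where
  "strict_hN scale G \<mu> P \<longleftrightarrow> Vector_Spaces.linear scale scale P \<and> (\<forall>d. \<forall>x\<in>G d. P x \<in> G d) \<and>
     (\<forall>n\<ge>1. \<forall>ds as. length ds = n \<longrightarrow> homs G ds as \<longrightarrow>
        \<mu> n (map P as) = (\<Sum>j\<in>{1..n}. scale (sgnI (int j - 1)) ((P ^^ j) (muSP_sum \<mu> P n j as))))"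

text \<open>Deformed multiplications mu_{n,P} (mu_{1,P} = mu_1; the value at n = 0 is irrelevant).\<close>
definition deformed :: "('k::field \<Rightarrow> 'v::ab_group_add \<Rightarrow> 'v) \<Rightarrow> (nat \<Rightarrow> 'v list \<Rightarrow> 'v) \<Rightarrow> ('v \<Rightarrow> 'v) \<Rightarrow> nat \<Rightarrow> 'v list \<Rightarrow> 'v" where
  "deformed scale \<mu> P n as =
     (if n \<le> 1 then \<mu> n as
      else (\<Sum>j\<in>{1..n}. scale (sgnI (int j - 1)) ((P ^^ (j - 1)) (muSP_sum \<mu> P n j as))))"

end

theory Submission
  imports Defs
begin

definition sg :: "nat \<Rightarrow> 'v::ab_group_add \<Rightarrow> 'v" where
  "sg m x = (if even m then x else - x)"

definition EE :: "nat set \<Rightarrow> ((nat \<Rightarrow> nat) \<Rightarrow> nat \<Rightarrow> 'v::ab_group_add) \<Rightarrow> (nat \<Rightarrow> nat) \<Rightarrow> (nat \<Rightarrow> nat) \<Rightarrow> nat \<Rightarrow> 'v" where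
  "EE A f w e e0 = (\<Sum>S\<in>Pow A. sg (card S) (f (\<lambda>i. e i + (if i \<in> A \<and> i \<notin> S then w i else 0)) (e0 + sum w S)))"

lemma sum_Pow_split:
  assumes "finite A" "j \<in> A"
  shows "(\<Sum>S\<in>Pow A. g S) = (\<Sum>S\<in>Pow (A - {j}). g S + g (insert j S))"
proof -
  have A: "A = insert j (A - {j})" using assms by auto
  have "(\<Sum>S\<in>Pow A. g S) = (\<Sum>S\<in>Pow (A - {j}) \<union> insert j ` Pow (A - {j}). g S)"
    by (subst A, subst Pow_insert) simp
  also have "\<dots> = (\<Sum>S\<in>Pow (A - {j}). g S) + (\<Sum>S\<in>insert j ` Pow (A - {j}). g S)"
    by (rule sum.union_disjoint) (use assms in auto)
  also have "(\<Sum>S\<in>insert j ` Pow (A - {j}). g S) = (\<Sum>S\<in>Pow (A - {j}). g (insert j S))"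
    by (rule sum.reindex_cong[where l="insert j"]) (auto simp: inj_on_def)
  finally show ?thesis by (simp add: sum.distrib)
qed

lemma sg_Suc[simp]: "sg (Suc m) x = - sg m x"
  by (simp add: sg_def)

lemma EE_split:
  assumes "finite A" "j \<in> A"
  shows "EE A f w e e0 = (\<Sum>S\<in>Pow (A - {j}).
     sg (card S) (f (\<lambda>i. e i + (if i \<in> A \<and> i \<notin> S then w i else 0)) (e0 + sum w S)) +
     sg (card (insert j S)) (f (\<lambda>i. e i + (if i \<in> A \<and> i \<notin> insert j S then w i else 0)) (e0 + sum w (insert j S))))"
  unfolding EE_def by (rule sum_Pow_split[OF assms])

lemma EE_step:
  assumes "finite A" "j \<in> A"
  shows "EE A f (w(j:=Suc a)) e e0 = EE A f (w(j:=a)) (e(j:=Suc (e j))) e0 + EE A f (w(j:=1)) e (e0+a)"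
proof -
  have "EE A f (w(j:=Suc a)) e e0 - EE A f (w(j:=a)) (e(j:=Suc (e j))) e0 - EE A f (w(j:=1)) e (e0+a) = 0"
    apply (simp only: EE_split[OF assms] sum_subtractf[symmetric])
    apply (rule sum.neutral, rule ballI)
    subgoal for S
    proof -
    assume "S \<in> Pow (A - {j})"
    hence S: "S \<subseteq> A" "j \<notin> S" "finite S" using assms finite_subset by auto
    have c: "card (insert j S) = Suc (card S)" using S by simp
    have s: "\<And>x. sum (w(j:=x)) S = sum w S" using S by (intro sum.cong) auto
    have s2: "\<And>x. sum (w(j:=x)) (insert j S) = x + sum w S" using S s by simp
    have ar1: "e0 + a + (1 + sum w S) = e0 + (Suc a + sum w S)" by simp
    have ar2: "e0 + a + sum w S = e0 + (a + sum w S)" by simp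
    have f1: "(\<lambda>i. e i + (if i \<in> A \<and> i \<notin> S then (w(j := Suc a)) i else 0)) =
       (\<lambda>i. (e(j:=Suc (e j))) i + (if i \<in> A \<and> i \<notin> S then (w(j := a)) i else 0))"
      using S assms by (auto simp: fun_eq_iff)
    have f2: "(\<lambda>i. (e(j:=Suc (e j))) i + (if i \<in> A \<and> i \<notin> insert j S then (w(j := a)) i else 0)) =
       (\<lambda>i. e i + (if i \<in> A \<and> i \<notin> S then (w(j := 1)) i else 0))"
      using S assms by (auto simp: fun_eq_iff)
    have f3: "\<And>x y. (\<lambda>i. e i + (if i \<in> A \<and> i \<notin> insert j S then (w(j := x)) i else 0)) =
       (\<lambda>i. e i + (if i \<in> A \<and> i \<notin> insert j S then (w(j := y)) i else 0))"
      using S assms by (auto simp: fun_eq_iff)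
    show ?thesis
      unfolding c s s2 f1 f2 sg_Suc
      apply (subst f3[of "Suc a" 1])
      apply (simp only: ar1 ar2)
      by (simp add: algebra_simps)
  qed
  done
  thus ?thesis by (simp add: algebra_simps)
qed

lemma EE_zero:
  assumes "finite A" "j \<in> A"
  shows "EE A f (w(j:=0)) e e0 = 0"
  apply (simp only: EE_split[OF assms])
  apply (rule sum.neutral, rule ballI)
  subgoal for S
  proof -
  assume "S \<in> Pow (A - {j})"
  hence S: "S \<subseteq> A" "j \<notin> S" "finite S" using assms finite_subset by auto
  have c: "card (insert j S) = Suc (card S)" using S by simp
  have s2: "sum (w(j:=0)) (insert j S) = sum (w(j:=0)) S" using S by simp
  have f: "(\<lambda>i. e i + (if i \<in> A \<and> i \<notin> insert j S then (w(j := 0)) i else 0)) =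
       (\<lambda>i. e i + (if i \<in> A \<and> i \<notin> S then (w(j := 0)) i else 0))"
    using S assms by (auto simp: fun_eq_iff)
  show ?thesis
    unfolding c s2 f by simp
  qed
  done

lemma EE_main:
  assumes fin: "finite A" and H: "\<And>e e0. EE A f (\<lambda>_. 1) e e0 = 0"
  shows "EE A f (\<lambda>_. k) e e0 = 0"
proof -
  have "finite B \<Longrightarrow> B \<subseteq> A \<Longrightarrow> \<forall>e e0. EE A f (\<lambda>i. if i \<in> B then k else 1) e e0 = 0" for B
  proof (induction B rule: finite_induct)
    case empty then show ?case using H by simp
  next
    case (insert j B)
    define w where "w = (\<lambda>i. if i \<in> B then k else (1::nat))"
    have j: "j \<in> A" using insert by auto
    have w1: "w(j:=1) = w" using insert by (auto simp: w_def fun_eq_iff)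
    have IH: "\<forall>e e0. EE A f w e e0 = 0" using insert by (auto simp: w_def)
    have "\<forall>e e0. EE A f (w(j:=a)) e e0 = 0" for a
    proof (induction a)
      case 0 then show ?case using EE_zero[OF fin j] by blast
    next
      case (Suc a) then show ?case unfolding EE_step[OF fin j] w1
        using IH by (simp only: Suc.IH[rule_format] IH[rule_format] add_0_left)
    qed
    moreover have "(\<lambda>i. if i \<in> insert j B then k else 1) = w(j:=k)" by (auto simp: w_def fun_eq_iff)
    ultimately show ?case by simp
  qed
  from this[OF fin order_refl] have "EE A f (\<lambda>i. if i \<in> A then k else 1) e e0 = 0" by blast
  moreover have "EE A f (\<lambda>i. if i \<in> A then k else 1) e e0 = EE A f (\<lambda>_. k) e e0"
    unfolding EE_def
    apply (rule sum.cong, simp)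
    apply (rule arg_cong2[where f=sg], simp)
    apply (rule arg_cong2[where f=f])
     apply (auto simp: fun_eq_iff)
    apply (subst sum.cong[of _ _ _ "\<lambda>_. k"])
    by auto
  ultimately show ?thesis by simp
qed

lemma lin_add: "Vector_Spaces.linear s s h \<Longrightarrow> h (x + y) = h x + h y"
  by (simp add: Vector_Spaces.linear_iff)

lemma lin_vs: "Vector_Spaces.linear s s h \<Longrightarrow> vector_space s"
  by (simp add: Vector_Spaces.linear_iff)

lemma lin_sum: "Vector_Spaces.linear s s h \<Longrightarrow> h (sum g A) = (\<Sum>a\<in>A. h (g a))"
  by (rule module_hom.sum[of s s]) (simp add: module_hom_iff_linear)

lemma lin_neg: "Vector_Spaces.linear s s h \<Longrightarrow> h (- x) = - h x"
  by (rule module_hom.neg[of s s]) (simp add: module_hom_iff_linear)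

lemma lin_zero: "Vector_Spaces.linear s s h \<Longrightarrow> h 0 = 0"
  by (rule module_hom.zero[of s s]) (simp add: module_hom_iff_linear)

lemma lin_sg: "Vector_Spaces.linear s s h \<Longrightarrow> h (sg m x) = sg m (h x)"
  by (simp add: sg_def lin_neg)

lemma sg_sum: "sg m (sum g A) = (\<Sum>a\<in>A. sg m (g a))"
  by (simp add: sg_def sum_negf)

lemma sg_sg: "sg a (sg b x) = sg b (sg a x)"
  by (simp add: sg_def)

lemma lin_pow: assumes lN: "Vector_Spaces.linear s s N" shows "Vector_Spaces.linear s s (N ^^ k)"
proof (induction k)
  case 0
  then show ?case using vector_space.linear_id[OF lin_vs[OF lN]] by (simp add: id_def)
next
  case (Suc k)
  show ?case unfolding funpow.simps(2) by (rule Vector_Spaces.linear_compose[OF Suc.IH lN])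
qed

lemma pw: "(N ^^ a) ((N ^^ b) x) = (N ^^ (a + b)) x"
  by (simp add: funpow_add)

lemma pres_pow: "\<forall>d. \<forall>x\<in>G d. N x \<in> G d \<Longrightarrow> \<forall>d. \<forall>x\<in>G d. (N ^^ k) x \<in> G d"
  by (induction k) auto

lemma scale_sgnI:
  fixes s :: "'k::field \<Rightarrow> 'v::ab_group_add \<Rightarrow> 'v"
  assumes vs: "vector_space s" and j: "1 \<le> j"
  shows "s (sgnI (int j - 1)) x = sg (j - 1) x"
proof -
  have m: "module s" using vs by (simp only: module_iff_vector_space)
  have one: "s 1 x = x" by (rule module.scale_one[OF m])
  have mone: "s (-1) x = - x" using module.scale_minus_left[OF m, of 1 x] one by simp
  have e: "int j - 1 = int (j - 1)" using j by simp
  show ?thesis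
  proof (cases "even (j - 1)")
    case True
    then have "(sgnI (int j - 1) :: 'k) = 1" unfolding e sgnI_def by simp
    then show ?thesis using True one by (simp add: sg_def)
  next
    case False
    then have "(sgnI (int j - 1) :: 'k) = -1" unfolding e sgnI_def by simp
    then show ?thesis using False mone by (simp add: sg_def)
  qed
qed

lemma conv:
  assumes vs: "vector_space s" and lh: "\<And>j. Vector_Spaces.linear s s (h j)"
  shows "(\<Sum>j\<in>{1..n}. s (sgnI (int j - 1)) (h j (muSP_sum \<mu>' Q n j bs))) =
         (\<Sum>S\<in>Pow {1..n} - {{}}. sg (card S - 1) (h (card S) (muSP \<mu>' Q n S bs)))"
proof -
  have "(\<Sum>j\<in>{1..n}. s (sgnI (int j - 1)) (h j (muSP_sum \<mu>' Q n j bs))) =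
        (\<Sum>j\<in>{1..n}. \<Sum>S\<in>{S. S \<in> Pow {1..n} - {{}} \<and> card S = j}. sg (card S - 1) (h (card S) (muSP \<mu>' Q n S bs)))"
  proof (rule sum.cong[OF refl])
    fix j assume j: "j \<in> {1..n}"
    have e: "{S. S \<in> Pow {1..n} - {{}} \<and> card S = j} = {S. S \<subseteq> {1..n} \<and> card S = j}"
      using j by auto
    show "s (sgnI (int j - 1)) (h j (muSP_sum \<mu>' Q n j bs)) =
        (\<Sum>S\<in>{S. S \<in> Pow {1..n} - {{}} \<and> card S = j}. sg (card S - 1) (h (card S) (muSP \<mu>' Q n S bs)))"
    proof -
      have "s (sgnI (int j - 1)) (h j (muSP_sum \<mu>' Q n j bs)) = sg (j - 1) (h j (muSP_sum \<mu>' Q n j bs))"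
        by (rule scale_sgnI[OF vs]) (use j in simp)
      also have "\<dots> = (\<Sum>S\<in>{S. S \<subseteq> {1..n} \<and> card S = j}. sg (j - 1) (h j (muSP \<mu>' Q n S bs)))"
        unfolding muSP_sum_def lin_sum[OF lh] sg_sum ..
      also have "\<dots> = (\<Sum>S\<in>{S. S \<subseteq> {1..n} \<and> card S = j}. sg (card S - 1) (h (card S) (muSP \<mu>' Q n S bs)))"
        by (rule sum.cong) simp_all
      finally show ?thesis unfolding e .
    qed
  qed
  also have "\<dots> = (\<Sum>S\<in>Pow {1..n} - {{}}. sg (card S - 1) (h (card S) (muSP \<mu>' Q n S bs)))"
  proof (rule sum.group)
    show "card ` (Pow {1..n} - {{}}) \<subseteq> {1..n}"
    proof
      fix c assume "c \<in> card ` (Pow {1..n} - {{}})"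
      then obtain S where S: "S \<subseteq> {1..n}" "S \<noteq> {}" "c = card S" by auto
      have "finite S" using S(1) finite_subset by blast
      then have "card S \<ge> 1" using S(2) by (simp add: Suc_le_eq card_gt_0_iff)
      moreover have "card S \<le> n" using card_mono[OF _ S(1)] by simp
      ultimately show "c \<in> {1..n}" using S by auto
    qed
  qed auto
  finally show ?thesis .
qed

definition ZZ :: "(nat \<Rightarrow> 'v list \<Rightarrow> 'v) \<Rightarrow> ('v \<Rightarrow> 'v) \<Rightarrow> nat \<Rightarrow> 'v list \<Rightarrow> 'v::ab_group_add" where
  "ZZ \<mu>' Q n bs = (\<Sum>S\<in>Pow {1..n}. sg (card S) ((Q ^^ card S) (muSP \<mu>' Q n S bs)))"

lemma map_nth_eq: "length bs = n \<Longrightarrow> map (\<lambda>i. Q (bs ! i)) [0..<n] = map Q bs"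
  by (rule nth_equalityI) auto

lemma hN_iff:
  assumes vs: "vector_space s" and lQ: "Vector_Spaces.linear s s Q" and len: "length bs = n"
  shows "(\<mu>' n (map Q bs) = (\<Sum>j\<in>{1..n}. s (sgnI (int j - 1)) ((Q ^^ j) (muSP_sum \<mu>' Q n j bs))))
     \<longleftrightarrow> ZZ \<mu>' Q n bs = 0"
proof -
  let ?R = "(\<Sum>S\<in>Pow {1..n} - {{}}. sg (card S - 1) ((Q ^^ card S) (muSP \<mu>' Q n S bs)))"
  have c: "(\<Sum>j\<in>{1..n}. s (sgnI (int j - 1)) ((Q ^^ j) (muSP_sum \<mu>' Q n j bs))) = ?R"
    by (rule conv[OF vs lin_pow[OF lQ]])
  have "ZZ \<mu>' Q n bs = sg (card {}) ((Q ^^ card {}) (muSP \<mu>' Q n {} bs)) +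
      (\<Sum>S\<in>Pow {1..n} - {{}}. sg (card S) ((Q ^^ card S) (muSP \<mu>' Q n S bs)))"
    unfolding ZZ_def by (subst sum.remove[of _ "{}"]) simp_all
  also have "sg (card {}) ((Q ^^ card {}) (muSP \<mu>' Q n {} bs)) = \<mu>' n (map Q bs)"
    using len by (simp add: sg_def muSP_def map_nth_eq)
  also have "(\<Sum>S\<in>Pow {1..n} - {{}}. sg (card S) ((Q ^^ card S) (muSP \<mu>' Q n S bs))) = - ?R"
    unfolding sum_negf[symmetric]
  proof (rule sum.cong[OF refl])
    fix S assume "S \<in> Pow {1..n} - {{}}"
    then have "card S \<noteq> 0" using finite_subset by (auto simp: card_eq_0_iff)
    then have "card S = Suc (card S - 1)" by simp
    then show "sg (card S) ((Q ^^ card S) (muSP \<mu>' Q n S bs)) = - sg (card S - 1) ((Q ^^ card S) (muSP \<mu>' Q n S bs))"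
      by (metis sg_Suc)
  qed
  finally have Z: "ZZ \<mu>' Q n bs = \<mu>' n (map Q bs) + - ?R" .
  show ?thesis unfolding c Z by simp
qed

definition FF :: "('v \<Rightarrow> 'v) \<Rightarrow> (nat \<Rightarrow> 'v list \<Rightarrow> 'v) \<Rightarrow> nat \<Rightarrow> 'v list \<Rightarrow> (nat \<Rightarrow> nat) \<Rightarrow> nat \<Rightarrow> 'v" where
  "FF N \<mu> n as e e0 = (N ^^ e0) (\<mu> n (map (\<lambda>i. (N ^^ e (Suc i)) (as ! i)) [0..<n]))"

lemma hyp_EE:
  assumes lN: "Vector_Spaces.linear s s N"
    and pres: "\<forall>d. \<forall>x\<in>G d. N x \<in> G d"
    and H: "\<And>bs. homs G ds bs \<Longrightarrow> ZZ \<mu> N n bs = 0"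
    and hom: "homs G ds as" and len: "length ds = n"
  shows "EE {1..n} (FF N \<mu> n as) (\<lambda>_. 1) e e0 = 0"
proof -
  define bs where "bs = map (\<lambda>i. (N ^^ e (Suc i)) (as ! i)) [0..<n]"
  have lena: "length as = n" using hom len by (simp add: homs_def)
  have "homs G ds bs" using hom len pres_pow[OF pres] by (auto simp: homs_def bs_def)
  then have "(N ^^ e0) (ZZ \<mu> N n bs) = 0" using H lin_zero[OF lin_pow[OF lN]] by simp
  moreover have "(N ^^ e0) (ZZ \<mu> N n bs) = EE {1..n} (FF N \<mu> n as) (\<lambda>_. 1) e e0"
    unfolding ZZ_def EE_def lin_sum[OF lin_pow[OF lN]] lin_sg[OF lin_pow[OF lN]]
  proof (rule sum.cong[OF refl])
    fix S assume S: "S \<in> Pow {1..n}"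
    have "muSP \<mu> N n S bs = \<mu> n (map (\<lambda>i. (N ^^ (e (Suc i) + (if Suc i \<in> {1..n} \<and> Suc i \<notin> S then 1 else 0))) (as ! i)) [0..<n])"
      unfolding muSP_def bs_def by (rule arg_cong[where f="\<mu> n"], rule map_cong) auto
    then show "sg (card S) ((N ^^ e0) ((N ^^ card S) (muSP \<mu> N n S bs))) =
         sg (card S) (FF N \<mu> n as (\<lambda>i. e i + (if i \<in> {1..n} \<and> i \<notin> S then 1 else 0)) (e0 + sum (\<lambda>_. 1) S))"
      by (simp add: FF_def pw)
  qed
  ultimately show ?thesis by simp
qed

lemma part1:
  assumes lN: "Vector_Spaces.linear s s N"
    and pres: "\<forall>d. \<forall>x\<in>G d. N x \<in> G d"
    and H: "\<And>bs. homs G ds bs \<Longrightarrow> ZZ \<mu> N n bs = 0"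
    and hom: "homs G ds as" and len: "length ds = n"
  shows "EE {1..n} (FF N \<mu> n as) (\<lambda>_. k) e e0 = 0"
  by (rule EE_main) (use hyp_EE[OF assms] in auto)

lemma ZZ_pow:
  assumes "length as = n"
  shows "ZZ \<mu> (N ^^ k) n as = EE {1..n} (FF N \<mu> n as) (\<lambda>_. k) (\<lambda>_. 0) 0"
  unfolding ZZ_def EE_def
proof (rule sum.cong[OF refl])
  fix S assume S: "S \<in> Pow {1..n}"
  have "muSP \<mu> (N ^^ k) n S as = \<mu> n (map (\<lambda>i. (N ^^ (0 + (if Suc i \<in> {1..n} \<and> Suc i \<notin> S then k else 0))) (as ! i)) [0..<n])"
    unfolding muSP_def by (rule arg_cong[where f="\<mu> n"], rule map_cong) auto
  then show "sg (card S) (((N ^^ k) ^^ card S) (muSP \<mu> (N ^^ k) n S as)) =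
         sg (card S) (FF N \<mu> n as (\<lambda>i. 0 + (if i \<in> {1..n} \<and> i \<notin> S then k else 0)) (0 + sum (\<lambda>_. k) S))"
    by (simp add: FF_def funpow_mult mult.commute)
qed

lemma def_expand:
  assumes vs: "vector_space s" and lQ: "Vector_Spaces.linear s s Q" and n: "1 \<le> n" and len: "length cs = n"
  shows "deformed s \<mu> Q n cs = (\<Sum>S\<in>Pow {1..n} - {{}}. sg (card S - 1) ((Q ^^ (card S - 1)) (muSP \<mu> Q n S cs)))"
proof (cases "n = 1")
  case True
  then obtain c where c: "cs = [c]" using len by (auto simp: length_Suc_conv)
  have P: "Pow {1..n} - {{}} = {{1}}" using True by auto
  show ?thesis unfolding P using True c by (simp add: deformed_def sg_def muSP_def)
next
  case False
  then have "\<not> n \<le> 1" using n by simp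
  then have "deformed s \<mu> Q n cs = (\<Sum>j\<in>{1..n}. s (sgnI (int j - 1)) ((Q ^^ (j - 1)) (muSP_sum \<mu> Q n j cs)))"
    by (simp add: deformed_def)
  also have "\<dots> = (\<Sum>S\<in>Pow {1..n} - {{}}. sg (card S - 1) ((Q ^^ (card S - 1)) (muSP \<mu> Q n S cs)))"
    by (rule conv[OF vs lin_pow[OF lQ]])
  finally show ?thesis .
qed

lemma sg_zero[simp]: "sg m (0::'v::ab_group_add) = 0"
  by (simp add: sg_def)

lemma part2:
  assumes lN: "Vector_Spaces.linear s s N"
    and P1: "\<And>k e e0. EE {1..n} (FF N \<mu> n as) (\<lambda>_. k) e e0 = 0"
    and n: "1 \<le> n" and len: "length as = n"
  shows "ZZ (deformed s \<mu> (N ^^ k)) (N ^^ l) n as = 0"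
proof -
  define A where "A = {1..n}"
  define cs where "cs S = map (\<lambda>i. if Suc i \<in> S then as ! i else (N ^^ l) (as ! i)) [0..<n]" for S
  define ek where "ek S' = (\<lambda>j. if j \<in> A \<and> j \<notin> S' then k else 0)" for S'
  define T where "T S S' = sg (card S' - 1) (sg (card S) (FF N \<mu> n as (\<lambda>j. ek S' j + (if j \<in> A \<and> j \<notin> S then l else 0)) (k * (card S' - 1) + sum (\<lambda>_. l) S)))" for S S'
  have vs: "vector_space s" using lN by (rule lin_vs)
  have lk: "Vector_Spaces.linear s s (N ^^ k)" by (rule lin_pow[OF lN])
  have ll: "\<And>m. Vector_Spaces.linear s s (N ^^ m)" by (rule lin_pow[OF lN])
  have "ZZ (deformed s \<mu> (N ^^ k)) (N ^^ l) n as = (\<Sum>S\<in>Pow A. \<Sum>S'\<in>Pow A - {{}}. T S S')"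
    unfolding ZZ_def A_def[symmetric]
  proof (rule sum.cong[OF refl])
    fix S assume S: "S \<in> Pow A"
    have m: "muSP (deformed s \<mu> (N ^^ k)) (N ^^ l) n S as = deformed s \<mu> (N ^^ k) n (cs S)"
      by (simp add: muSP_def cs_def)
    have lc: "length (cs S) = n" by (simp add: cs_def)
    show "sg (card S) (((N ^^ l) ^^ card S) (muSP (deformed s \<mu> (N ^^ k)) (N ^^ l) n S as)) =
          (\<Sum>S'\<in>Pow A - {{}}. T S S')"
      unfolding m def_expand[OF vs lk n lc] funpow_mult lin_sum[OF ll] sg_sum A_def[symmetric]
      apply (rule sum.cong[OF refl])
      subgoal for S'
      proof -
      have mu: "muSP \<mu> (N ^^ k) n S' (cs S) =
         \<mu> n (map (\<lambda>i. (N ^^ (ek S' (Suc i) + (if Suc i \<in> A \<and> Suc i \<notin> S then l else 0))) (as ! i)) [0..<n])"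
        unfolding muSP_def
        by (rule arg_cong[where f="\<mu> n"], rule map_cong[OF refl])
           (auto simp: cs_def ek_def A_def pw)
      show ?thesis
        unfolding T_def mu funpow_mult lin_sg[OF ll] FF_def pw
        by (simp add: sg_sg add.commute mult.commute)
    qed
    done
  qed
  also have "\<dots> = (\<Sum>S'\<in>Pow A - {{}}. \<Sum>S\<in>Pow A. T S S')" by (rule sum.swap)
  also have "\<dots> = (\<Sum>S'\<in>Pow A - {{}}. sg (card S' - 1) (EE A (FF N \<mu> n as) (\<lambda>_. l) (ek S') (k * (card S' - 1))))"
    unfolding EE_def sg_sum T_def ..
  also have "\<dots> = 0" using P1 unfolding A_def by simp
  finally show ?thesis .
qed

theorem theorem6p15:
  fixes scale :: "'k::field_char_0 \<Rightarrow> 'v::ab_group_add \<Rightarrow> 'v"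
    and G :: "int \<Rightarrow> 'v set"
    and \<mu> :: "nat \<Rightarrow> 'v list \<Rightarrow> 'v"
    and N :: "'v \<Rightarrow> 'v"
  assumes "A_inf scale G \<mu>"
    and "strict_hN scale G \<mu> N"
  shows "(\<forall>k. strict_hN scale G \<mu> (N ^^ k)) \<and>
         (\<forall>k l. strict_hN scale G (deformed scale \<mu> (N ^^ k)) (N ^^ l))"
proof -
  have lN: "Vector_Spaces.linear scale scale N" and pres: "\<forall>d. \<forall>x\<in>G d. N x \<in> G d"
    and hN: "\<And>n ds as. 1 \<le> n \<Longrightarrow> length ds = n \<Longrightarrow> homs G ds as \<Longrightarrow>
        \<mu> n (map N as) = (\<Sum>j\<in>{1..n}. scale (sgnI (int j - 1)) ((N ^^ j) (muSP_sum \<mu> N n j as)))"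
    using assms(2) unfolding strict_hN_def by blast+
  have vs: "vector_space scale" by (rule lin_vs[OF lN])
  have H: "ZZ \<mu> N n bs = 0" if "1 \<le> n" "length ds = n" "homs G ds bs" for n ds bs
  proof -
    have "length bs = n" using that by (simp add: homs_def)
    then show ?thesis using hN[OF that] hN_iff[OF vs lN] by blast
  qed
  have P1: "EE {1..n} (FF N \<mu> n as) (\<lambda>_. k) e e0 = 0"
    if "1 \<le> n" "length ds = n" "homs G ds as" for n ds as k e e0
    by (rule part1[OF lN pres H[OF that(1,2)] that(3,2)])
  show ?thesis
  proof (intro conjI allI)
    fix k
    show "strict_hN scale G \<mu> (N ^^ k)"
      unfolding strict_hN_def
      apply (intro conjI allI impI)
        apply (rule lin_pow[OF lN])
       apply (use pres_pow[OF pres] in blast)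
      subgoal for n ds as
      proof -
        assume n: "1 \<le> n" and len: "length ds = n" and hom: "homs G ds as"
        have la: "length as = n" using hom len by (simp add: homs_def)
        show ?thesis
          unfolding hN_iff[OF vs lin_pow[OF lN] la] ZZ_pow[OF la] by (rule P1[OF n len hom])
      qed
      done
  next
    fix k l
    show "strict_hN scale G (deformed scale \<mu> (N ^^ k)) (N ^^ l)"
      unfolding strict_hN_def
      apply (intro conjI allI impI)
        apply (rule lin_pow[OF lN])
       apply (use pres_pow[OF pres] in blast)
      subgoal for n ds as
      proof -
        assume n: "1 \<le> n" and len: "length ds = n" and hom: "homs G ds as"
        have la: "length as = n" using hom len by (simp add: homs_def)
        show ?thesis
          unfolding hN_iff[OF vs lin_pow[OF lN] la]
          by (rule part2[OF lN P1[OF n len hom] n la])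
      qed
      done
  qed
qed

end
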